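(* Let $p\ge1$ and $\gamma_1,\ldots,\gamma_p \in (0,1)$ be such that $\{1,\gamma_1,\ldots,\gamma_p\}$ is linearly independent over $\mathbb{Q}$. Then every $\vec{x} \in X_{\gamma_1} \times \cdots \times X_{\gamma_p}$, regarded as a sequence in $\Sigma_{2,p}^\omega$, satisfies $P(\vec{x},n)=(n+1)^p$ for every $n \geq 1$.
   Context: $\Sigma_2=\{0,1\}$, $\Sigma_2^\omega$ is the set of infinite binary sequences $x=x_1x_2\cdots$. A subword of $x$ of length $n$ is $x_{k+1}\cdots x_{k+n}$ for some $k\ge0$, and $P(x,n)$ is the number of distinct subwords of length $n$. A sequence is recurrent if every subword occurs infinitely often. For a finite word $u$ over $\{0,1\}$, $|u|_1$ is the number of $1$'s in $u$; $x$ is balanced if $||u|_1-|v|_1|\le 1$ for all subwords $u,v$ of $x$ of the same length. For $\gamma\in[0,1]$, $X_\gamma$ is the set of $x\in\Sigma_2^\omega$ that are recurrent, balanced, and satisfy $\lim_{n\to\infty}\frac1n\#\{1\le j\le n: x_j=1\}=\gamma$. $\Sigma_{2,p}=\Sigma_2^p$ is the alphabet of $p$-tuples, and a sequence $\vec x=\vec x_1\vec x_2\cdots\in\Sigma_{2,p}^\omega$ with $\vec x_i=(x^{(1)}_i,\ldots,x^{(p)}_i)$ is identified with the $p$-tuple of binary sequences $(x^{(1)},\ldots,x^{(p)})$, where $x^{(j)}=x^{(j)}_1x^{(j)}_2\cdots$; subwords and $P(\vec x,n)$ are taken over the alphabet $\Sigma_{2,p}$. *)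

theory Defs
  imports Complex_Main
begin

text \<open>Infinite sequences over an alphabet 'a are functions nat => 'a, indexed from 0
  (x 0 is the paper's x_1). Binary sequences use bool, with True standing for the letter 1.\<close>

definition subword :: "(nat \<Rightarrow> 'a) \<Rightarrow> nat \<Rightarrow> nat \<Rightarrow> 'a list" where
  "subword x k n = map (\<lambda>i. x (k + i)) [0..<n]"

definition subwords :: "(nat \<Rightarrow> 'a) \<Rightarrow> nat \<Rightarrow> 'a list set" where
  "subwords x n = {subword x k n | k. True}"

definition complexity :: "(nat \<Rightarrow> 'a) \<Rightarrow> nat \<Rightarrow> nat" where
  "complexity x n = card (subwords x n)"

definition recurrent :: "(nat \<Rightarrow> 'a) \<Rightarrow> bool" where
  "recurrent x \<longleftrightarrow> (\<forall>n k. infinite {k'. subword x k' n = subword x k n})"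

definition ones :: "bool list \<Rightarrow> nat" where
  "ones u = length (filter id u)"

definition balanced :: "(nat \<Rightarrow> bool) \<Rightarrow> bool" where
  "balanced x \<longleftrightarrow> (\<forall>n. \<forall>u\<in>subwords x n. \<forall>v\<in>subwords x n.
      \<bar>int (ones u) - int (ones v)\<bar> \<le> 1)"

definition X :: "real \<Rightarrow> (nat \<Rightarrow> bool) set" where
  "X \<gamma> = {x. recurrent x \<and> balanced x \<and>
      (\<lambda>n. real (card {j. 1 \<le> j \<and> j \<le> n \<and> x (j - 1)}) / real n) \<longlonglongrightarrow> \<gamma>}"

definition tuple_seq :: "nat \<Rightarrow> (nat \<Rightarrow> nat \<Rightarrow> bool) \<Rightarrow> nat \<Rightarrow> bool list" where
  "tuple_seq p xs i = map (\<lambda>j. xs j i) [0..<p]"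

end

theory Submission
  imports Defs "HOL-Analysis.Kronecker_Approximation_Theorem"
begin


lemma indep_lemma:
  fixes \<gamma> :: "nat \<Rightarrow> real" and p :: nat
  assumes lt1: "\<forall>j<p. \<gamma> j < 1"
    and ind: "\<forall>c0 c. c0 \<in> \<rat> \<and> (\<forall>j<p. c j \<in> \<rat>) \<and> c0 + (\<Sum>j<p. c j * \<gamma> j) = 0
           \<longrightarrow> c0 = 0 \<and> (\<forall>j<p. c j = 0)"
  shows "module.independent (\<lambda>r x. of_int r * x) ((\<gamma>(p:=1)) ` {..p})"
    and "inj_on (\<gamma>(p:=1)) {..p}"
proof -
  interpret Modules.module "(\<lambda>r. (*) (real_of_int r))"
    by (simp add: Modules.module.intro distrib_left mult.commute)
  define \<theta> where "\<theta> = \<gamma>(p:=1)"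
  show inj: "inj_on (\<gamma>(p:=1)) {..p}"
  proof (rule inj_onI)
    fix i j assume ij: "i \<in> {..p}" "j \<in> {..p}" "(\<gamma>(p:=1)) i = (\<gamma>(p:=1)) j"
    show "i = j"
    proof (rule ccontr)
      assume ne: "i \<noteq> j"
      show False
      proof (cases "i = p \<or> j = p")
        case True
        then show ?thesis using ij ne lt1 by (auto split: if_splits simp: le_less)
      next
        case False
        hence ip: "i < p" "j < p" using ij by auto
        have eq: "\<gamma> i = \<gamma> j" using ij False by auto
        define c where "c = (\<lambda>k. if k = i then 1 else if k = j then -1 else (0::real))"
        have "(\<Sum>k<p. c k * \<gamma> k) = (\<Sum>k\<in>{i,j}. c k * \<gamma> k)"
          by (rule sum.mono_neutral_right) (use ip in \<open>auto simp: c_def\<close>)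
        also have "\<dots> = 0" using ne eq by (simp add: c_def)
        finally have "0 + (\<Sum>k<p. c k * \<gamma> k) = 0" by simp
        moreover have "\<forall>k<p. c k \<in> \<rat>" by (simp add: c_def)
        ultimately have "c i = 0" using ind ip by (metis Rats_0)
        then show False by (simp add: c_def)
      qed
    qed
  qed
  show "module.independent (\<lambda>r x. of_int r * x) ((\<gamma>(p:=1)) ` {..p})"
    unfolding independent_explicit_module
  proof (intro allI impI)
    fix t u v
    assume t: "finite t" "t \<subseteq> (\<gamma>(p:=1)) ` {..p}" and s: "(\<Sum>v\<in>t. real_of_int (u v) * v) = 0"
      and v: "v \<in> t"
    define J where "J = {j\<in>{..p}. \<theta> j \<in> t}"
    have tJ: "t = \<theta> ` J" using t by (auto simp: J_def \<theta>_def)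
    have injJ: "inj_on \<theta> J" using inj unfolding \<theta>_def[symmetric] by (rule inj_on_subset) (auto simp: J_def)
    define c where "c = (\<lambda>j. if j \<in> J then real_of_int (u (\<theta> j)) else 0)"
    have "(\<Sum>v\<in>t. real_of_int (u v) * v) = (\<Sum>j\<in>J. real_of_int (u (\<theta> j)) * \<theta> j)"
      unfolding tJ by (simp add: sum.reindex[OF injJ])
    also have "\<dots> = (\<Sum>j\<in>{..p}. c j * \<theta> j)"
      by (rule sum.mono_neutral_cong_left) (auto simp: J_def c_def)
    also have "\<dots> = c p + (\<Sum>j<p. c j * \<gamma> j)"
      by (simp add: lessThan_Suc_atMost[symmetric] \<theta>_def)
    finally have "c p + (\<Sum>j<p. c j * \<gamma> j) = 0" using s by simp
    moreover have "c p \<in> \<rat>" "\<forall>j<p. c j \<in> \<rat>" by (auto simp: c_def)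
    ultimately have z: "c p = 0" "\<forall>j<p. c j = 0" using ind by blast+
    obtain j where j: "j \<in> J" "v = \<theta> j" using v tJ by auto
    have "c j = 0" using z j by (cases "j = p") (auto simp: J_def)
    then show "u v = 0" using j by (simp add: c_def)
  qed
qed

lemma abs2: "\<bar>z\<bar> < d/2 \<Longrightarrow> \<bar>2*z\<bar> < (d::real)" by (simp add: abs_mult)

lemma kron_int:
  fixes \<gamma> \<alpha> :: "nat \<Rightarrow> real" and p :: nat
  assumes lt1: "\<forall>j<p. \<gamma> j < 1"
    and ind: "\<forall>c0 c. c0 \<in> \<rat> \<and> (\<forall>j<p. c j \<in> \<rat>) \<and> c0 + (\<Sum>j<p. c j * \<gamma> j) = 0
           \<longrightarrow> c0 = 0 \<and> (\<forall>j<p. c j = 0)"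
    and e: "\<epsilon> > 0"
  obtains k :: int and m :: "nat \<Rightarrow> int" where "\<And>i. i < p \<Longrightarrow> \<bar>of_int k * \<gamma> i - of_int (m i) - \<alpha> i\<bar> < \<epsilon>"
proof -
  obtain k m where "\<And>i. i < p \<Longrightarrow> \<bar>of_int k * (\<gamma>(p:=1)) i - of_int (m i) - \<alpha> i\<bar> < \<epsilon>"
    using Kronecker_thm_2[OF indep_lemma(1)[OF lt1 ind] indep_lemma(2)[OF lt1 ind] _ e, of \<alpha>] by auto
  then show ?thesis using that[of k m] by auto
qed

lemma kron_nat:
  fixes \<gamma> \<alpha> :: "nat \<Rightarrow> real" and p :: nat
  assumes lt1: "\<forall>j<p. \<gamma> j < 1"
    and ind: "\<forall>c0 c. c0 \<in> \<rat> \<and> (\<forall>j<p. c j \<in> \<rat>) \<and> c0 + (\<Sum>j<p. c j * \<gamma> j) = 0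
           \<longrightarrow> c0 = 0 \<and> (\<forall>j<p. c j = 0)"
    and e: "\<epsilon> > 0"
  shows "\<exists>k::nat. \<exists>m :: nat \<Rightarrow> int. \<forall>i<p. \<bar>real k * \<gamma> i - of_int (m i) - \<alpha> i\<bar> < \<epsilon>"
proof (cases "p = 0")
  case True then show ?thesis by auto
next
  case False
  obtain k1 m1 where k1: "\<And>i. i < p \<Longrightarrow> \<bar>of_int k1 * \<gamma> i - of_int (m1 i) - \<alpha> i\<bar> < \<epsilon>/2"
    using kron_int[OF lt1 ind, of "\<epsilon>/2" \<alpha>] e by auto
  define \<delta> where "\<delta> = min (1/2) (\<epsilon> / (2 * (\<bar>real_of_int k1\<bar> + 1)))"
  have dpos: "\<delta> > 0" using e by (simp add: \<delta>_def)
  obtain k2 m2 where k2: "\<And>i. i < p \<Longrightarrow> \<bar>of_int k2 * \<gamma> i - of_int (m2 i) - 1/2\<bar> < \<delta>/2"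
    using kron_int[OF lt1 ind, of "\<delta>/2" "\<lambda>_. 1/2"] dpos by auto
  have "k2 \<noteq> 0"
  proof
    assume "k2 = 0"
    have "\<delta> \<le> 1/2" unfolding \<delta>_def by (rule min.cobounded1)
    with k2[of 0] False \<open>k2 = 0\<close> have "\<bar>- of_int (m2 0) - 1/2\<bar> < (1::real)/4"
      by simp
    moreover have "\<bar>- of_int (m2 0) - 1/2\<bar> \<ge> (1::real)/2"
    proof (cases "m2 0 \<ge> 0")
      case True then show ?thesis by (smt (verit) of_int_0_le_iff)
    next
      case False then have "m2 0 \<le> -1" by simp
      then have "real_of_int (m2 0) \<le> -1" by linarith
      then show ?thesis by linarith
    qed
    ultimately show False by linarith
  qed
  define K where "K = \<bar>2 * k2\<bar>"
  define M where "M = (\<lambda>i. sgn k2 * (2 * m2 i + 1))"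
  have Kge: "K \<ge> 1" using \<open>k2 \<noteq> 0\<close> by (simp add: K_def)
  have KM: "\<bar>of_int K * \<gamma> i - of_int (M i)\<bar> < \<delta>" if "i < p" for i
  proof -
    have a: "\<bar>of_int (2*k2) * \<gamma> i - of_int (2 * m2 i + 1)\<bar> < \<delta>"
    proof -
      have eq: "of_int (2*k2) * \<gamma> i - of_int (2 * m2 i + 1) = 2 * (of_int k2 * \<gamma> i - of_int (m2 i) - 1/2)"
        by (simp add: algebra_simps)
      have "\<bar>2 * (of_int k2 * \<gamma> i - of_int (m2 i) - 1/2)\<bar> < \<delta>" using abs2[OF k2[OF that]] .
      then show ?thesis by (simp only: eq)
    qed
    show ?thesis
    proof (cases "k2 > 0")
      case True then show ?thesis using a by (simp add: K_def M_def)
    next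
      case False
      then have "k2 < 0" using \<open>k2 \<noteq> 0\<close> by simp
      then have "of_int K * \<gamma> i - of_int (M i) = - (of_int (2*k2) * \<gamma> i - of_int (2 * m2 i + 1))"
        by (simp add: K_def M_def algebra_simps)
      then show ?thesis using a by (simp only: abs_minus_cancel)
    qed
  qed
  define k where "k = k1 + K * \<bar>k1\<bar>"
  have k0: "k \<ge> 0"
  proof -
    have "K * \<bar>k1\<bar> \<ge> 1 * \<bar>k1\<bar>" using Kge by (intro mult_right_mono) auto
    then show ?thesis by (simp add: k_def)
  qed
  define m where "m = (\<lambda>i. m1 i + \<bar>k1\<bar> * M i)"
  have "\<bar>real (nat k) * \<gamma> i - of_int (m i) - \<alpha> i\<bar> < \<epsilon>" if i: "i < p" for i
  proof -
    have eq: "real (nat k) * \<gamma> i - of_int (m i) - \<alpha> i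
      = (of_int k1 * \<gamma> i - of_int (m1 i) - \<alpha> i) + of_int \<bar>k1\<bar> * (of_int K * \<gamma> i - of_int (M i))"
      using k0 by (simp add: k_def m_def algebra_simps)
    have b: "\<bar>of_int \<bar>k1\<bar> * (of_int K * \<gamma> i - of_int (M i))\<bar> \<le> \<bar>real_of_int k1\<bar> * \<delta>"
      using KM[OF i] by (simp add: abs_mult mult_left_mono less_imp_le)
    have c: "\<bar>real_of_int k1\<bar> * \<delta> \<le> \<epsilon>/2"
    proof -
      have "\<bar>real_of_int k1\<bar> * \<delta> \<le> \<bar>real_of_int k1\<bar> * (\<epsilon> / (2 * (\<bar>real_of_int k1\<bar> + 1)))"
        by (intro mult_left_mono) (auto simp: \<delta>_def)
      also have "\<dots> \<le> \<epsilon>/2" using e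
        by (simp add: field_simps)
      finally show ?thesis .
    qed
    show ?thesis unfolding eq using k1[OF i] b c by linarith
  qed
  then show ?thesis by blast
qed




definition cnt :: "(nat \<Rightarrow> bool) \<Rightarrow> nat \<Rightarrow> int" where
  "cnt x m = int (card {i. i < m \<and> x i})"

lemma cnt_0[simp]: "cnt x 0 = 0" by (simp add: cnt_def)

lemma cnt_Suc: "cnt x (Suc m) = cnt x m + (if x m then 1 else 0)"
proof -
  have "{i. i < Suc m \<and> x i} = {i. i < m \<and> x i} \<union> (if x m then {m} else {})"
    by (auto simp: less_Suc_eq)
  then show ?thesis by (auto simp: cnt_def)
qed

lemma ones_subword: "int (ones (subword x k n)) = cnt x (k+n) - cnt x k"
proof (induction n)
  case 0 then show ?case by (simp add: ones_def subword_def)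
next
  case (Suc n)
  have "subword x k (Suc n) = subword x k n @ [x (k+n)]" by (simp add: subword_def)
  then have "int (ones (subword x k (Suc n))) = int (ones (subword x k n)) + (if x (k+n) then 1 else 0)"
    by (simp add: ones_def)
  then show ?case using Suc by (simp add: cnt_Suc)
qed

lemma subword_eq_iff: "subword x k n = subword x k' n \<longleftrightarrow> (\<forall>i<n. x (k+i) = x (k'+i))"
  by (auto simp: subword_def map_eq_conv)

lemma subword_eq_cnt:
  "subword x k n = subword x k' n \<longleftrightarrow> (\<forall>i\<le>n. cnt x (k+i) - cnt x k = cnt x (k'+i) - cnt x k')"
proof
  assume "subword x k n = subword x k' n"
  then have h: "\<forall>i<n. x (k+i) = x (k'+i)" by (simp add: subword_eq_iff)
  show "\<forall>i\<le>n. cnt x (k+i) - cnt x k = cnt x (k'+i) - cnt x k'"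
  proof (intro allI impI)
    fix i assume "i \<le> n"
    then show "cnt x (k+i) - cnt x k = cnt x (k'+i) - cnt x k'"
    proof (induction i)
      case 0 then show ?case by simp
    next
      case (Suc i)
      then have "x (k+i) = x (k'+i)" using h by auto
      then show ?case using Suc by (simp add: cnt_Suc)
    qed
  qed
next
  assume h: "\<forall>i\<le>n. cnt x (k+i) - cnt x k = cnt x (k'+i) - cnt x k'"
  have "x (k+i) = x (k'+i)" if "i < n" for i
  proof -
    have "cnt x (k+Suc i) - cnt x (k+i) = cnt x (k'+Suc i) - cnt x (k'+i)"
      using h[rule_format, of i] h[rule_format, of "Suc i"] that by simp
    then show ?thesis by (simp add: cnt_Suc split: if_splits)
  qed
  then show "subword x k n = subword x k' n" by (simp add: subword_eq_iff)
qed

lemma freq_card: fixes x :: "nat \<Rightarrow> bool" shows "card {j. 1 \<le> j \<and> j \<le> n \<and> x (j - 1)} = card {i. i < n \<and> x i}"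
proof -
  have "{j. 1 \<le> j \<and> j \<le> n \<and> x (j - 1)} = Suc ` {i. i < n \<and> x i}"
  proof (rule set_eqI, rule iffI)
    fix j assume "j \<in> {j. 1 \<le> j \<and> j \<le> n \<and> x (j - 1)}"
    then show "j \<in> Suc ` {i. i < n \<and> x i}" by (intro image_eqI[of _ _ "j - 1"]) auto
  qed auto
  then show ?thesis by (simp add: card_image)
qed

lemma cnt_mono_window:
  assumes "balanced x"
  shows "\<bar>(cnt x (m+k) - cnt x m) - (cnt x (m'+k) - cnt x m')\<bar> \<le> 1"
proof -
  have "subword x m k \<in> subwords x k" "subword x m' k \<in> subwords x k" by (auto simp: subwords_def)
  then have "\<bar>int (ones (subword x m k)) - int (ones (subword x m' k))\<bar> \<le> 1"
    using assms by (auto simp: balanced_def)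
  then show ?thesis by (simp add: ones_subword)
qed

lemma cnt_mult: "cnt x (j*k) = (\<Sum>i<j. cnt x (i*k+k) - cnt x (i*k))"
  by (induction j) (auto simp: algebra_simps)

lemma window_bound:
  fixes \<gamma> :: real
  assumes bal: "balanced x"
    and lim: "(\<lambda>n. real_of_int (cnt x n) / real n) \<longlonglongrightarrow> \<gamma>"
    and irr: "\<forall>a b::int. of_int a * \<gamma> = of_int b \<longrightarrow> a = 0"
  shows "\<bar>real_of_int (cnt x (m+k) - cnt x m) - real k * \<gamma>\<bar> < 1"
proof (cases "k = 0")
  case True then show ?thesis by simp
next
  case False
  define w where "w = cnt x (m+k) - cnt x m"
  have lim2: "(\<lambda>j. real_of_int (cnt x (j*k)) / real (j*k)) \<longlonglongrightarrow> \<gamma>"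
  proof -
    have "strict_mono (\<lambda>j. j*k)" using False by (auto simp: strict_mono_def)
    from LIMSEQ_subseq_LIMSEQ[OF lim this] show ?thesis by (simp add: o_def)
  qed
  have up: "cnt x (j*k) \<le> int j * (w + 1)" for j
  proof -
    have "cnt x (j*k) = (\<Sum>i<j. cnt x (i*k+k) - cnt x (i*k))" by (rule cnt_mult)
    also have "\<dots> \<le> (\<Sum>i<j. w + 1)"
    proof (rule sum_mono)
      fix i
      have "\<bar>(cnt x (i*k+k) - cnt x (i*k)) - w\<bar> \<le> 1" using cnt_mono_window[OF bal, of "i*k" k m] by (simp add: w_def)
      then show "cnt x (i*k+k) - cnt x (i*k) \<le> w + 1" by linarith
    qed
    finally show ?thesis by simp
  qed
  have lo: "cnt x (j*k) \<ge> int j * (w - 1)" for j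
  proof -
    have "(\<Sum>i<j. w - 1) \<le> (\<Sum>i<j. cnt x (i*k+k) - cnt x (i*k))"
    proof (rule sum_mono)
      fix i
      have "\<bar>(cnt x (i*k+k) - cnt x (i*k)) - w\<bar> \<le> 1" using cnt_mono_window[OF bal, of "i*k" k m] by (simp add: w_def)
      then show "w - 1 \<le> cnt x (i*k+k) - cnt x (i*k)" by linarith
    qed
    also have "\<dots> = cnt x (j*k)" by (rule cnt_mult[symmetric])
    finally show ?thesis by simp
  qed
  have kpos: "real k > 0" using False by simp
  have g1: "\<gamma> \<le> real_of_int (w+1) / real k"
  proof (rule LIMSEQ_le_const2[OF lim2], intro exI[of _ 1] allI impI)
    fix j :: nat assume "j \<ge> 1"
    then have jp: "real j > 0" by simp
    have "real_of_int (cnt x (j*k)) \<le> real j * real_of_int (w+1)" using up[of j]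
      by (metis of_int_le_iff of_int_mult of_int_of_nat_eq)
    then show "real_of_int (cnt x (j*k)) / real (j*k) \<le> real_of_int (w+1) / real k"
      using jp kpos by (simp add: divide_simps mult.commute mult.left_commute)
  qed
  have g2: "\<gamma> \<ge> real_of_int (w-1) / real k"
  proof (rule LIMSEQ_le_const[OF lim2], intro exI[of _ 1] allI impI)
    fix j :: nat assume "j \<ge> 1"
    then have jp: "real j > 0" by simp
    have "real_of_int (cnt x (j*k)) \<ge> real j * real_of_int (w-1)" using lo[of j]
      by (metis of_int_le_iff of_int_mult of_int_of_nat_eq)
    then show "real_of_int (cnt x (j*k)) / real (j*k) \<ge> real_of_int (w-1) / real k"
      using jp kpos by (simp add: divide_simps mult.commute mult.left_commute)
  qed
  have a: "real k * \<gamma> \<le> real_of_int w + 1" using g1 kpos by (simp add: field_simps)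
  have b: "real k * \<gamma> \<ge> real_of_int w - 1" using g2 kpos by (simp add: field_simps)
  have c: "real k * \<gamma> \<noteq> real_of_int (w + 1)" "real k * \<gamma> \<noteq> real_of_int (w - 1)"
    using irr False by (metis of_int_of_nat_eq of_nat_eq_0_iff)+
  show ?thesis using a b c by (simp add: w_def[symmetric])
qed

lemma mechanical:
  fixes \<gamma> :: real
  assumes bal: "balanced x"
    and lim: "(\<lambda>n. real_of_int (cnt x n) / real n) \<longlonglongrightarrow> \<gamma>"
    and irr: "\<forall>a b::int. of_int a * \<gamma> = of_int b \<longrightarrow> a = 0"
  shows "\<exists>s::int. \<exists>c::real. (s = 1 \<or> s = -1) \<and> (\<forall>m. cnt x m = s * \<lfloor>real m * (of_int s * \<gamma>) + c\<rfloor>)"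
proof -
  define d where "d = (\<lambda>m. real_of_int (cnt x m) - real m * \<gamma>)"
  have dd: "\<bar>d a - d b\<bar> < 1" for a b
  proof -
    have *: "\<bar>d b - d a\<bar> < 1" if "a \<le> b" for a b
    proof -
      obtain k where b: "b = a + k" using \<open>a \<le> b\<close> le_Suc_ex by blast
      have "d b - d a = real_of_int (cnt x (a+k) - cnt x a) - real k * \<gamma>"
        by (simp add: d_def b algebra_simps)
      then show ?thesis using window_bound[OF bal lim irr, of a k] by simp
    qed
    show ?thesis
    proof (cases "a \<le> b")
      case True then show ?thesis using *[OF True] by (simp add: abs_minus_commute)
    next
      case False then show ?thesis using *[of b a] by simp
    qed
  qed
  have bdd: "bdd_below (range d)"
  proof (rule bdd_belowI[of _ "d 0 - 1"])
    fix y assume "y \<in> range d"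
    then obtain b where "y = d b" by auto
    then show "d 0 - 1 \<le> y" using dd[of 0 b] by (simp add: abs_less_iff)
  qed
  define c0 where "c0 = Inf (range d)"
  have lower: "c0 \<le> d m" for m unfolding c0_def by (rule cInf_lower[OF _ bdd]) auto
  have upper: "d m \<le> c0 + 1" for m
  proof -
    have "d m - 1 \<le> c0" unfolding c0_def
    proof (rule cInf_greatest)
      fix y assume "y \<in> range d"
      then obtain b where "y = d b" by auto
      then show "d m - 1 \<le> y" using dd[of m b] by (simp add: abs_less_iff)
    qed auto
    then show ?thesis by simp
  qed
  show ?thesis
  proof (cases "\<exists>m0. d m0 = c0")
    case True
    then obtain m0 where m0: "d m0 = c0" by blast
    have "cnt x m = - \<lfloor>real m * (of_int (-1) * \<gamma>) + (- c0)\<rfloor>" for m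
    proof -
      have "d m < c0 + 1" using dd[of m m0] m0 by simp
      then have "\<lceil>real m * \<gamma> + c0\<rceil> = cnt x m"
        using lower[of m] unfolding ceiling_eq_iff d_def by linarith
      then show ?thesis by (simp add: ceiling_def)
    qed
    then show ?thesis by (intro exI[of _ "-1"] exI[of _ "-c0"]) simp
  next
    case False
    have "cnt x m = 1 * \<lfloor>real m * (of_int 1 * \<gamma>) + (c0 + 1)\<rfloor>" for m
    proof -
      have "c0 < d m" using lower[of m] False by (metis order_le_less)
      then have "\<lfloor>real m * \<gamma> + (c0+1)\<rfloor> = cnt x m"
        using upper[of m] unfolding floor_eq_iff d_def by linarith
      then show ?thesis by simp
    qed
    then show ?thesis by (intro exI[of _ 1] exI[of _ "c0+1"]) simp
  qed
qed




lemma sorted_nle: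
  fixes xs :: "real list"
  assumes s: "sorted_wrt (<) xs" and "i \<le> j" "j < length xs"
  shows "xs ! i \<le> xs ! j"
  using sorted_wrt_nth_less[OF s, of i j] assms by (cases "i = j") auto

lemma interval_list:
  fixes xs :: "real list"
  assumes s: "sorted_wrt (<) xs" and R: "set xs \<subseteq> {0<..<1}" and l: "l \<le> length xs"
  shows "\<exists>a b. 0 \<le> a \<and> a < b \<and> b \<le> 1 \<and> (\<forall>t. a < t \<and> t < b \<longrightarrow> card {v\<in>set xs. v \<le> t} = l)"
proof -
  define a where "a = (if l = 0 then 0 else xs ! (l - 1))"
  define b where "b = (if l = length xs then 1 else xs ! l)"
  have inR: "\<And>i. i < length xs \<Longrightarrow> 0 < xs ! i \<and> xs ! i < 1" using R nth_mem by fastforce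
  have a0: "0 \<le> a" using inR l by (auto simp: a_def less_imp_le)
  have b1: "b \<le> 1" using inR l by (auto simp: b_def less_imp_le)
  have ab: "a < b"
  proof (cases "l = 0")
    case True
    then show ?thesis using inR l by (cases "length xs = 0") (auto simp: a_def b_def)
  next
    case False
    then show ?thesis using inR l sorted_wrt_nth_less[OF s, of "l-1" l]
      by (cases "l = length xs") (auto simp: a_def b_def)
  qed
  have dist: "distinct xs" using s by (simp add: strict_sorted_iff)
  have "card {v\<in>set xs. v \<le> t} = l" if t: "a < t" "t < b" for t
  proof -
    have "{v\<in>set xs. v \<le> t} = set (take l xs)"
    proof (rule set_eqI, rule iffI)
      fix v assume "v \<in> {v\<in>set xs. v \<le> t}"
      then obtain i where i: "i < length xs" "v = xs ! i" "v \<le> t" by (auto simp: in_set_conv_nth)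
      have "i < l"
      proof (rule ccontr)
        assume "\<not> i < l"
        then have "l < length xs" "xs ! l \<le> xs ! i" using i sorted_nle[OF s, of l i] by auto
        then show False using i t by (auto simp: b_def)
      qed
      then show "v \<in> set (take l xs)" using i l by (auto simp: in_set_conv_nth intro!: exI[of _ i])
    next
      fix v assume "v \<in> set (take l xs)"
      then obtain i where i: "i < l" "v = xs ! i" using l by (auto simp: in_set_conv_nth)
      have "xs ! i \<le> xs ! (l - 1)" using sorted_nle[OF s, of i "l-1"] i l by auto
      then have "v \<le> t" using i t by (auto simp: a_def)
      moreover have "v \<in> set xs" using i l by auto
      ultimately show "v \<in> {v\<in>set xs. v \<le> t}" by auto
    qed
    also have "card \<dots> = l" using dist l by (simp add: distinct_card)
    finally show ?thesis .
  qed
  then show ?thesis using a0 ab b1 by blast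
qed

lemma interval_set:
  fixes R :: "real set"
  assumes f: "finite R" and R: "R \<subseteq> {0<..<1}" and l: "l \<le> card R"
  shows "\<exists>a b. 0 \<le> a \<and> a < b \<and> b \<le> 1 \<and> (\<forall>t. a < t \<and> t < b \<longrightarrow> card {v\<in>R. v \<le> t} = l)"
proof -
  obtain xs where xs: "sorted_wrt (<) xs" "set xs = R" using finite_set_strict_sorted[OF f] by blast
  have "length xs = card R" using xs by (metis distinct_card strict_sorted_iff)
  then show ?thesis using interval_list[OF xs(1), of l] xs R l by auto
qed

definition Sg :: "real \<Rightarrow> nat \<Rightarrow> real \<Rightarrow> int" where
  "Sg \<beta> n t = (\<Sum>i\<in>{1..n}. \<lfloor>real i * \<beta> + t\<rfloor>)"

definition Ab :: "real \<Rightarrow> nat \<Rightarrow> int" where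
  "Ab \<beta> n = (\<Sum>i\<in>{1..n}. \<lfloor>real i * \<beta>\<rfloor>)"

lemma floor_shift:
  fixes y t :: real
  assumes "0 \<le> t" "t < 1"
  shows "\<lfloor>y + t\<rfloor> = \<lfloor>y\<rfloor> + (if 1 \<le> frac y + t then 1 else 0)"
proof -
  have "y + t = of_int \<lfloor>y\<rfloor> + (frac y + t)" by (simp add: frac_def)
  then have "\<lfloor>y + t\<rfloor> = \<lfloor>y\<rfloor> + \<lfloor>frac y + t\<rfloor>" by (simp only: int_add_floor)
  moreover have "\<lfloor>frac y + t\<rfloor> = (if 1 \<le> frac y + t then 1 else 0)"
    using assms frac_ge_0[of y] frac_lt_1[of y] by (simp add: floor_eq_iff)
  ultimately show ?thesis by simp
qed

lemma Sg_Ab: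
  assumes "0 \<le> t" "t < 1"
  shows "Sg \<beta> n t = Ab \<beta> n + int (card {i\<in>{1..n}. 1 - frac (real i * \<beta>) \<le> t})"
proof -
  have "Sg \<beta> n t = (\<Sum>i\<in>{1..n}. \<lfloor>real i * \<beta>\<rfloor> + (if 1 \<le> frac (real i * \<beta>) + t then 1 else 0))"
    unfolding Sg_def using floor_shift[OF assms] by simp
  also have "\<dots> = Ab \<beta> n + (\<Sum>i\<in>{1..n}. (if 1 \<le> frac (real i * \<beta>) + t then 1 else 0))"
    by (simp add: sum.distrib Ab_def)
  also have "(\<Sum>i\<in>{1..n}. (if 1 \<le> frac (real i * \<beta>) + t then 1 else 0)) = int (card {i\<in>{1..n}. 1 - frac (real i * \<beta>) \<le> t})"
  proof -
    have "(\<Sum>i\<in>{1..n}. (if 1 \<le> frac (real i * \<beta>) + t then 1 else 0)) = int (card ({1..n} \<inter> {i. 1 \<le> frac (real i * \<beta>) + t}))"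
      by (simp add: sum.If_cases)
    also have "{1..n} \<inter> {i. 1 \<le> frac (real i * \<beta>) + t} = {i\<in>{1..n}. 1 - frac (real i * \<beta>) \<le> t}" by auto
    finally show ?thesis .
  qed
  finally show ?thesis .
qed

lemma Sg_range:
  assumes "0 \<le> t" "t < 1"
  shows "Ab \<beta> n \<le> Sg \<beta> n t \<and> Sg \<beta> n t \<le> Ab \<beta> n + int n"
proof -
  have "card {i\<in>{1..n}. 1 - frac (real i * \<beta>) \<le> t} \<le> card {1..n}" by (rule card_mono) auto
  then show ?thesis using Sg_Ab[OF assms, of \<beta> n] by simp
qed

lemma Sg_inj:
  assumes t: "0 \<le> t" "t < 1" and t': "0 \<le> t'" "t' < 1" and eq: "Sg \<beta> n t = Sg \<beta> n t'"
    and i: "i \<in> {1..n}"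
  shows "\<lfloor>real i * \<beta> + t\<rfloor> = \<lfloor>real i * \<beta> + t'\<rfloor>"
proof -
  have *: "\<lfloor>real i * \<beta> + u\<rfloor> = \<lfloor>real i * \<beta> + u'\<rfloor>" if "u \<le> u'" "Sg \<beta> n u = Sg \<beta> n u'" for u u'
  proof (rule ccontr)
    assume ne: "\<lfloor>real i * \<beta> + u\<rfloor> \<noteq> \<lfloor>real i * \<beta> + u'\<rfloor>"
    have "Sg \<beta> n u < Sg \<beta> n u'" unfolding Sg_def
    proof (rule sum_strict_mono_ex1)
      show "\<forall>j\<in>{1..n}. \<lfloor>real j * \<beta> + u\<rfloor> \<le> \<lfloor>real j * \<beta> + u'\<rfloor>" using that by (auto intro: floor_mono)
      have "\<lfloor>real i * \<beta> + u\<rfloor> \<le> \<lfloor>real i * \<beta> + u'\<rfloor>" using that by (auto intro: floor_mono)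
      then show "\<exists>j\<in>{1..n}. \<lfloor>real j * \<beta> + u\<rfloor> < \<lfloor>real j * \<beta> + u'\<rfloor>" using ne i by force
    qed simp
    then show False using that by simp
  qed
  show ?thesis
  proof (cases "t \<le> t'")
    case True then show ?thesis using *[of t t'] eq by simp
  next
    case False then show ?thesis using *[of t' t] eq by simp
  qed
qed

lemma Sg_levels:
  assumes irr: "\<forall>a b::int. of_int a * \<beta> = of_int b \<longrightarrow> a = 0" and l: "l \<le> n"
  shows "\<exists>a b. 0 \<le> a \<and> a < b \<and> b \<le> 1 \<and> (\<forall>t. a < t \<and> t < b \<longrightarrow> Sg \<beta> n t = Ab \<beta> n + int l)"
proof -
  define r where "r = (\<lambda>i::nat. 1 - frac (real i * \<beta>))"
  have fr0: "frac (real i * \<beta>) \<noteq> 0" if "i \<ge> 1" for i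
  proof
    assume "frac (real i * \<beta>) = 0"
    then have "of_int (int i) * \<beta> = of_int \<lfloor>real i * \<beta>\<rfloor>" by (simp add: frac_def)
    then have "int i = 0" using irr by blast
    then show False using that by simp
  qed
  have inj: "inj_on r {1..n}"
  proof (rule inj_onI)
    fix i j assume ij: "i \<in> {1..n}" "j \<in> {1..n}" "r i = r j"
    then have "frac (real i * \<beta>) = frac (real j * \<beta>)" by (simp add: r_def)
    then have "of_int (int i - int j) * \<beta> = of_int (\<lfloor>real i * \<beta>\<rfloor> - \<lfloor>real j * \<beta>\<rfloor>)"
      by (simp add: frac_def algebra_simps)
    then have "int i - int j = 0" using irr by blast
    then show "i = j" by simp
  qed
  define R where "R = r ` {1..n}"
  have cR: "card R = n" using inj by (simp add: R_def card_image)
  have R01: "R \<subseteq> {0<..<1}"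
  proof
    fix v assume "v \<in> R"
    then obtain i where i: "i \<in> {1..n}" "v = r i" by (auto simp: R_def)
    have "frac (real i * \<beta>) \<noteq> 0" using fr0 i by auto
    then have "0 < frac (real i * \<beta>)" using frac_ge_0[of "real i * \<beta>"] by linarith
    then show "v \<in> {0<..<1}" using i frac_lt_1[of "real i * \<beta>"] by (simp add: r_def)
  qed
  obtain a b where ab: "0 \<le> a" "a < b" "b \<le> 1" "\<forall>t. a < t \<and> t < b \<longrightarrow> card {v\<in>R. v \<le> t} = l"
    using interval_set[of R l] R01 cR l by (auto simp: R_def)
  have "Sg \<beta> n t = Ab \<beta> n + int l" if t: "a < t" "t < b" for t
  proof -
    have "{i\<in>{1..n}. 1 - frac (real i * \<beta>) \<le> t} = {i\<in>{1..n}. r i \<le> t}" by (simp add: r_def)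
    have injs: "inj_on r {i\<in>{1..n}. r i \<le> t}" by (rule inj_on_subset[OF inj]) auto
    have "card {i\<in>{1..n}. 1 - frac (real i * \<beta>) \<le> t} = card (r ` {i\<in>{1..n}. r i \<le> t})"
      using card_image[OF injs] by (simp add: r_def)
    also have "r ` {i\<in>{1..n}. r i \<le> t} = {v\<in>R. v \<le> t}" by (auto simp: R_def)
    finally show ?thesis using Sg_Ab[of t \<beta> n] t ab ab(4)[rule_format, of t] by simp
  qed
  then show ?thesis using ab by blast
qed




lemma card_range_kernel:
  assumes h: "\<And>k k'. f k = f k' \<longleftrightarrow> g k = g k'"
  shows "card (range f) = card (range g)"
proof -
  define G where "G = (\<lambda>w. g (SOME k. f k = w))"
  have Gf: "G (f k) = g k" for k
  proof -
    have "f (SOME k'. f k' = f k) = f k" by (rule someI) simp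
    then show ?thesis using h by (simp add: G_def)
  qed
  have "bij_betw G (range f) (range g)"
    unfolding bij_betw_def
  proof
    show "inj_on G (range f)"
      by (rule inj_onI) (auto simp: Gf h)
    show "G ` range f = range g" by (auto simp: Gf image_iff)
  qed
  then show ?thesis by (rule bij_betw_same_card)
qed

lemma restrict_eq_iff': "restrict f A = restrict g A \<longleftrightarrow> (\<forall>x\<in>A. f x = g x)"
  by (auto simp: restrict_def fun_eq_iff)

lemma tuple_subword_eq:
  "subword (tuple_seq p xs) k n = subword (tuple_seq p xs) k' n \<longleftrightarrow>
    (\<forall>j<p. subword (xs j) k n = subword (xs j) k' n)"
  by (auto simp: subword_eq_iff tuple_seq_def map_eq_conv)

lemma cnt_diff_floor:
  fixes s :: int
  assumes h: "\<forall>m. cnt x m = s * \<lfloor>real m * \<beta> + c\<rfloor>"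
  shows "cnt x (k+i) - cnt x k = s * \<lfloor>real i * \<beta> + frac (real k * \<beta> + c)\<rfloor>"
proof -
  have "real (k+i) * \<beta> + c = (real i * \<beta> + frac (real k * \<beta> + c)) + of_int \<lfloor>real k * \<beta> + c\<rfloor>"
    by (simp add: frac_def algebra_simps)
  then have "\<lfloor>real (k+i) * \<beta> + c\<rfloor> = \<lfloor>real i * \<beta> + frac (real k * \<beta> + c)\<rfloor> + \<lfloor>real k * \<beta> + c\<rfloor>"
    by (simp only: floor_add_int)
  then show ?thesis using h by (simp add: algebra_simps)
qed

lemma subword_level:
  fixes s :: int
  assumes h: "\<forall>m. cnt x m = s * \<lfloor>real m * \<beta> + c\<rfloor>" and s: "s \<noteq> 0"
  shows "subword x k n = subword x k' n \<longleftrightarrow>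
     Sg \<beta> n (frac (real k * \<beta> + c)) = Sg \<beta> n (frac (real k' * \<beta> + c))"
proof -
  define t where "t = frac (real k * \<beta> + c)"
  define t' where "t' = frac (real k' * \<beta> + c)"
  have t: "0 \<le> t" "t < 1" "0 \<le> t'" "t' < 1" by (auto simp: t_def t'_def frac_lt_1)
  have "subword x k n = subword x k' n \<longleftrightarrow> (\<forall>i\<le>n. \<lfloor>real i * \<beta> + t\<rfloor> = \<lfloor>real i * \<beta> + t'\<rfloor>)"
    unfolding subword_eq_cnt cnt_diff_floor[OF h] t_def t'_def using s by simp
  also have "\<dots> \<longleftrightarrow> Sg \<beta> n t = Sg \<beta> n t'"
  proof
    assume "\<forall>i\<le>n. \<lfloor>real i * \<beta> + t\<rfloor> = \<lfloor>real i * \<beta> + t'\<rfloor>"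
    then show "Sg \<beta> n t = Sg \<beta> n t'" unfolding Sg_def by (intro sum.cong) auto
  next
    assume eq: "Sg \<beta> n t = Sg \<beta> n t'"
    show "\<forall>i\<le>n. \<lfloor>real i * \<beta> + t\<rfloor> = \<lfloor>real i * \<beta> + t'\<rfloor>"
    proof (intro allI impI)
      fix i assume i: "i \<le> n"
      show "\<lfloor>real i * \<beta> + t\<rfloor> = \<lfloor>real i * \<beta> + t'\<rfloor>"
      proof (cases "i = 0")
        case True
        have "\<lfloor>t\<rfloor> = 0" "\<lfloor>t'\<rfloor> = 0" using t by (simp_all add: floor_eq_iff)
        then show ?thesis using True by simp
      next
        case False
        then show ?thesis using Sg_inj[OF t eq, of i] i by simp
      qed
    qed
  qed
  finally show ?thesis by (simp add: t_def t'_def)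
qed

theorem lemma3:
  fixes p :: nat and \<gamma> :: "nat \<Rightarrow> real" and xs :: "nat \<Rightarrow> nat \<Rightarrow> bool"
  assumes "p \<ge> 1"
    and "\<forall>j<p. 0 < \<gamma> j \<and> \<gamma> j < 1"
    and "\<forall>c0 c. c0 \<in> \<rat> \<and> (\<forall>j<p. c j \<in> \<rat>) \<and> c0 + (\<Sum>j<p. c j * \<gamma> j) = 0
           \<longrightarrow> c0 = 0 \<and> (\<forall>j<p. c j = 0)"
    and "\<forall>j<p. xs j \<in> X (\<gamma> j)"
  shows "\<forall>n\<ge>1. complexity (tuple_seq p xs) n = (n + 1) ^ p"
proof (intro allI impI)
  fix n :: nat assume "n \<ge> 1"
  note p1 = assms(1) and g01 = assms(2) and ind = assms(3) and inX = assms(4)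
  have lt1: "\<forall>j<p. \<gamma> j < 1" using g01 by auto
  have irr: "\<forall>a b::int. of_int a * \<gamma> j = of_int b \<longrightarrow> a = 0" if j: "j < p" for j
  proof (intro allI impI)
    fix a b :: int assume ab: "of_int a * \<gamma> j = of_int b"
    define c where "c = (\<lambda>i. if i = j then real_of_int a else 0)"
    have "(\<Sum>i<p. c i * \<gamma> i) = (\<Sum>i<p. if i = j then real_of_int a * \<gamma> j else 0)"
      by (intro sum.cong) (auto simp: c_def)
    also have "\<dots> = real_of_int a * \<gamma> j" using j by simp
    finally have "- of_int b + (\<Sum>i<p. c i * \<gamma> i) = 0" using ab by simp
    moreover have "- real_of_int b \<in> \<rat>" "\<forall>i<p. c i \<in> \<rat>" by (auto simp: c_def)
    ultimately have "c j = 0" using ind j by blast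
    then show "a = 0" by (simp add: c_def)
  qed
  have mech: "\<exists>s c. (s = 1 \<or> s = -1) \<and> (\<forall>m. cnt (xs j) m = s * \<lfloor>real m * (of_int s * \<gamma> j) + c\<rfloor>)"
    if j: "j < p" for j
  proof -
    have xj: "xs j \<in> X (\<gamma> j)" using inX j by auto
    have bal: "balanced (xs j)" using xj by (simp add: X_def)
    have "(\<lambda>n. real (card {i. 1 \<le> i \<and> i \<le> n \<and> xs j (i - 1)}) / real n) \<longlonglongrightarrow> \<gamma> j"
      using xj by (simp add: X_def)
    then have lim: "(\<lambda>n. real_of_int (cnt (xs j) n) / real n) \<longlonglongrightarrow> \<gamma> j"
      unfolding freq_card cnt_def by simp
    show ?thesis using mechanical[OF bal lim irr[OF j]] .
  qed
  obtain s c where sc: "\<forall>j<p. (s j = 1 \<or> s j = -1) \<and> (\<forall>m. cnt (xs j) m = s j * \<lfloor>real m * (of_int (s j) * \<gamma> j) + c j\<rfloor>)"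
  proof -
    have "\<forall>j. \<exists>sc::int \<times> real. j < p \<longrightarrow> (fst sc = 1 \<or> fst sc = -1) \<and> (\<forall>m. cnt (xs j) m = fst sc * \<lfloor>real m * (of_int (fst sc) * \<gamma> j) + snd sc\<rfloor>)"
      using mech by fastforce
    then obtain f where "\<forall>j. j < p \<longrightarrow> (fst (f j) = 1 \<or> fst (f j) = -1) \<and> (\<forall>m. cnt (xs j) m = fst (f j) * \<lfloor>real m * (of_int (fst (f j)) * \<gamma> j) + snd (f j)\<rfloor>)"
      by (metis choice)
    then show ?thesis using that[of "\<lambda>j. fst (f j)" "\<lambda>j. snd (f j)"] by blast
  qed
  define \<beta> where "\<beta> = (\<lambda>j. of_int (s j) * \<gamma> j)"
  define L where "L = (\<lambda>j k. Sg (\<beta> j) n (frac (real k * \<beta> j + c j)))"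
  have s0: "s j \<noteq> 0" if "j < p" for j using sc that by fastforce
  have irrb: "\<forall>a b::int. of_int a * \<beta> j = of_int b \<longrightarrow> a = 0" if j: "j < p" for j
  proof (intro allI impI)
    fix a b :: int assume "of_int a * \<beta> j = of_int b"
    then have "of_int (a * s j) * \<gamma> j = of_int b" by (simp add: \<beta>_def algebra_simps)
    then have "a * s j = 0" using irr[OF j] by blast
    then show "a = 0" using s0[OF j] by simp
  qed
  have D1: "subword (xs j) k n = subword (xs j) k' n \<longleftrightarrow> L j k = L j k'" if j: "j < p" for j k k'
    unfolding L_def using subword_level[of "xs j" "s j" "\<beta> j" "c j" k n k'] sc j s0[OF j]
    by (simp add: \<beta>_def)
  have "complexity (tuple_seq p xs) n = card (range (\<lambda>k. subword (tuple_seq p xs) k n))"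
    by (simp add: complexity_def subwords_def full_SetCompr_eq)
  also have "\<dots> = card (range (\<lambda>k. restrict (\<lambda>j. L j k) {..<p}))"
  proof (rule card_range_kernel)
    fix k k'
    have "(\<forall>j<p. subword (xs j) k n = subword (xs j) k' n) \<longleftrightarrow> (\<forall>j\<in>{..<p}. L j k = L j k')"
      using D1 by auto
    then show "subword (tuple_seq p xs) k n = subword (tuple_seq p xs) k' n \<longleftrightarrow>
        restrict (\<lambda>j. L j k) {..<p} = restrict (\<lambda>j. L j k') {..<p}"
      by (simp only: tuple_subword_eq restrict_eq_iff')
  qed
  also have "range (\<lambda>k. restrict (\<lambda>j. L j k) {..<p}) = PiE {..<p} (\<lambda>j. {Ab (\<beta> j) n .. Ab (\<beta> j) n + int n})"
  proof (rule set_eqI, rule iffI)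
    fix f assume "f \<in> range (\<lambda>k. restrict (\<lambda>j. L j k) {..<p})"
    then obtain k where f: "f = restrict (\<lambda>j. L j k) {..<p}" by auto
    have "L j k \<in> {Ab (\<beta> j) n .. Ab (\<beta> j) n + int n}" for j
      using Sg_range[of "frac (real k * \<beta> j + c j)" "\<beta> j" n, OF frac_ge_0 frac_lt_1] by (simp add: L_def)
    then show "f \<in> PiE {..<p} (\<lambda>j. {Ab (\<beta> j) n .. Ab (\<beta> j) n + int n})"
      by (simp add: f restrict_PiE_iff)
  next
    fix f assume f: "f \<in> PiE {..<p} (\<lambda>j. {Ab (\<beta> j) n .. Ab (\<beta> j) n + int n})"
    have lev: "\<exists>ab. 0 \<le> fst ab \<and> fst ab < snd ab \<and> snd ab \<le> 1 \<and>
        (\<forall>t. fst ab < t \<and> t < snd ab \<longrightarrow> Sg (\<beta> j) n t = f j)" if j: "j < p" for j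
    proof -
      have fj: "f j \<in> {Ab (\<beta> j) n .. Ab (\<beta> j) n + int n}" using f j by (simp add: PiE_iff)
      then have fj2: "0 \<le> f j - Ab (\<beta> j) n" "f j - Ab (\<beta> j) n \<le> int n" by auto
      define l where "l = nat (f j - Ab (\<beta> j) n)"
      have l1: "l \<le> n" using fj2 unfolding l_def by linarith
      have l2: "f j = Ab (\<beta> j) n + int l" using fj2 unfolding l_def by linarith
      obtain a b where ab: "0 \<le> a" "a < b" "b \<le> 1" "\<forall>t. a < t \<and> t < b \<longrightarrow> Sg (\<beta> j) n t = Ab (\<beta> j) n + int l"
        using Sg_levels[OF irrb[OF j] l1] by blast
      show ?thesis
        using ab l2 by (intro exI[of _ "(a, b)"]) simp
    qed
    obtain ab where ab: "\<forall>j<p. 0 \<le> fst (ab j) \<and> fst (ab j) < snd (ab j) \<and> snd (ab j) \<le> 1 \<and>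
        (\<forall>t. fst (ab j) < t \<and> t < snd (ab j) \<longrightarrow> Sg (\<beta> j) n t = f j)"
    proof -
      have "\<forall>j. \<exists>ab. j < p \<longrightarrow> 0 \<le> fst ab \<and> fst ab < snd ab \<and> snd ab \<le> 1 \<and>
        (\<forall>t. fst ab < t \<and> t < snd ab \<longrightarrow> Sg (\<beta> j) n t = f j)" using lev by blast
      then have "\<exists>g. \<forall>j. j < p \<longrightarrow> 0 \<le> fst (g j) \<and> fst (g j) < snd (g j) \<and> snd (g j) \<le> 1 \<and>
        (\<forall>t. fst (g j) < t \<and> t < snd (g j) \<longrightarrow> Sg (\<beta> j) n t = f j)" by (rule choice)
      then obtain g where "\<forall>j. j < p \<longrightarrow> 0 \<le> fst (g j) \<and> fst (g j) < snd (g j) \<and> snd (g j) \<le> 1 \<and>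
        (\<forall>t. fst (g j) < t \<and> t < snd (g j) \<longrightarrow> Sg (\<beta> j) n t = f j)" by blast
      then show ?thesis using that[of g] by blast
    qed
    define a where "a = (\<lambda>j. fst (ab j))"
    define b where "b = (\<lambda>j. snd (ab j))"
    define \<epsilon> where "\<epsilon> = Min ((\<lambda>j. (b j - a j)/2) ` {..<p})"
    have abl: "a j < b j" if "j < p" for j using ab that by (simp add: a_def b_def)
    have epos: "\<epsilon> > 0" unfolding \<epsilon>_def
    proof (subst Min_gr_iff)
      show "finite ((\<lambda>j. (b j - a j)/2) ` {..<p})" by simp
      show "(\<lambda>j. (b j - a j)/2) ` {..<p} \<noteq> {}" using p1 by (simp add: lessThan_empty_iff)
      show "\<forall>x\<in>(\<lambda>j. (b j - a j)/2) ` {..<p}. 0 < x" using abl by auto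
    qed
    have ele: "\<epsilon> \<le> (b j - a j)/2" if "j < p" for j unfolding \<epsilon>_def using that by (intro Min_le) auto
    define \<alpha> where "\<alpha> = (\<lambda>j. of_int (s j) * ((a j + b j)/2 - c j))"
    obtain k :: nat and m where km: "\<forall>i<p. \<bar>real k * \<gamma> i - of_int (m i) - \<alpha> i\<bar> < \<epsilon>"
      using kron_nat[OF lt1 ind epos, of \<alpha>] by blast
    have "L j k = f j" if j: "j < p" for j
    proof -
      define y where "y = real k * \<beta> j + c j - of_int (s j * m j)"
      have ss: "of_int (s j) * of_int (s j) = (1::real)" using sc j by auto
      have "real k * \<beta> j + c j - of_int (s j * m j) - (a j + b j)/2
          = of_int (s j) * (real k * \<gamma> j - of_int (m j) - \<alpha> j)"
        by (simp add: \<beta>_def \<alpha>_def right_diff_distrib mult.assoc[symmetric] ss)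
      then have "\<bar>y - (a j + b j)/2\<bar> = \<bar>of_int (s j)\<bar> * \<bar>real k * \<gamma> j - of_int (m j) - \<alpha> j\<bar>"
        by (simp only: y_def abs_mult)
      moreover have "\<bar>(of_int (s j)::real)\<bar> = 1" using sc j by auto
      ultimately have "\<bar>y - (a j + b j)/2\<bar> = \<bar>real k * \<gamma> j - of_int (m j) - \<alpha> j\<bar>" by simp
      moreover have "\<bar>real k * \<gamma> j - of_int (m j) - \<alpha> j\<bar> < \<epsilon>" using km j by blast
      ultimately have "\<bar>y - (a j + b j)/2\<bar> < (b j - a j)/2" using ele[OF j] by linarith
      then have "y - (a j + b j)/2 < (b j - a j)/2 \<and> - (y - (a j + b j)/2) < (b j - a j)/2"
        by (simp only: abs_less_iff)
      then have y: "a j < y" "y < b j" by (simp_all add: field_simps)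
      have abj: "0 \<le> a j" "b j \<le> 1" "\<forall>t. a j < t \<and> t < b j \<longrightarrow> Sg (\<beta> j) n t = f j"
        using ab j unfolding a_def b_def by blast+
      have "real k * \<beta> j + c j - y \<in> \<int>" unfolding y_def by simp
      moreover have "0 \<le> y" "y < 1" using y abj by linarith+
      ultimately have fr: "frac (real k * \<beta> j + c j) = y"
        unfolding frac_unique_iff by blast
      have "Sg (\<beta> j) n y = f j" using abj(3) y by blast
      then show ?thesis unfolding L_def fr .
    qed
    have "restrict (\<lambda>j. L j k) {..<p} = f"
    proof (rule ext)
      fix j show "restrict (\<lambda>j. L j k) {..<p} j = f j"
      proof (cases "j < p")
        case True then show ?thesis using \<open>\<And>j. j < p \<Longrightarrow> L j k = f j\<close> by simp
      next
        case False then show ?thesis using PiE_arb[OF f, of j] by simp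
      qed
    qed
    then show "f \<in> range (\<lambda>k. restrict (\<lambda>j. L j k) {..<p})" by (metis rangeI)
  qed
  also have "card (PiE {..<p} (\<lambda>j. {Ab (\<beta> j) n .. Ab (\<beta> j) n + int n})) = (n+1)^p"
  proof -
    have e: "nat (int n + 1) = Suc n" by (simp add: nat_add_distrib)
    show ?thesis by (simp add: card_PiE e)
  qed
  finally show "complexity (tuple_seq p xs) n = (n + 1) ^ p" .
qed


end
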